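(* Consider a batch contextual bandit with finite context (state) space $\mathcal{S}$, finite action space $\mathcal{A}$, context distribution $d_0\in\Delta(\mathcal{S})$ and reward distributions $R(s,a)\in\Delta([0,R_{\max}])$. Let $\pi_b$ be a behavior policy, $\mu:=d_0\times\pi_b$, and let $\mathcal{F}$ be a finite class of functions $\mathcal{S}\times\mathcal{A}\to[0,R_{\max}]$. Let $\hat f\in\mathcal{F}$ satisfy $\mathcal{L}_\mu(\hat f)-\min_{f\in\mathcal{F}}\mathcal{L}_\mu(f)\le\epsilon$. Assume (i) there is a constant $C<+\infty$ with $\pi_b(a\mid s)\ge 1/C$ for all $s\in\mathcal{S},a\in\mathcal{A}$, and (ii) $Q^\star\in\mathcal{F}$, where $Q^\star(s,a)=\mathbb{E}_{r\sim R(s,a)}[r]$. Then $$v^{\pi_{\hat f}}\ \ge\ v^\star-2\sqrt{C\epsilon}.$$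
   Context: The behavior policy $\pi_b:\mathcal{S}\to\Delta(\mathcal{A})$ generates data $s\sim d_0$, $a\sim\pi_b(\cdot\mid s)$, $r\sim R(s,a)$; $\mu$ is the resulting joint distribution of $(s,a)$. The population squared loss is $\mathcal{L}_\mu(f):=\mathbb{E}_{(s,a)\sim\mu,\,r\sim R(s,a)}[(f(s,a)-r)^2]$. For a function $f$, $\pi_f$ is its greedy policy $s\mapsto\arg\max_{a\in\mathcal{A}}f(s,a)$ (ties broken by a fixed rule). For a deterministic policy $\pi$, $v^\pi:=\mathbb{E}_{s\sim d_0,\,r\sim R(s,\pi(s))}[r]$, and $v^\star:=\mathbb{E}_{s\sim d_0}[\max_{a}Q^\star(s,a)]$ is the optimal value. *)

theory Defs
  imports "HOL-Probability.Probability"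
begin

definition Qstar :: "('s \<Rightarrow> 'a \<Rightarrow> real measure) \<Rightarrow> 's \<Rightarrow> 'a \<Rightarrow> real" where
  "Qstar R s a = (\<integral>r. r \<partial>(R s a))"

definition sq_loss :: "'s::finite pmf \<Rightarrow> ('s \<Rightarrow> 'a::finite pmf) \<Rightarrow> ('s \<Rightarrow> 'a \<Rightarrow> real measure)
    \<Rightarrow> ('s \<Rightarrow> 'a \<Rightarrow> real) \<Rightarrow> real" where
  "sq_loss d0 pib R f =
     (\<Sum>s\<in>UNIV. \<Sum>a\<in>UNIV. pmf d0 s * pmf (pib s) a * (\<integral>r. (f s a - r)\<^sup>2 \<partial>(R s a)))"

definition greedy :: "('s \<Rightarrow> 'a::finite \<Rightarrow> real) \<Rightarrow> 's \<Rightarrow> 'a" where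
  "greedy f s = (SOME a. \<forall>b. f s b \<le> f s a)"

definition value_of :: "'s::finite pmf \<Rightarrow> ('s \<Rightarrow> 'a \<Rightarrow> real measure) \<Rightarrow> ('s \<Rightarrow> 'a) \<Rightarrow> real" where
  "value_of d0 R pol = (\<Sum>s\<in>UNIV. pmf d0 s * (\<integral>r. r \<partial>(R s (pol s))))"

definition opt_value :: "'s::finite pmf \<Rightarrow> ('s \<Rightarrow> 'a::finite \<Rightarrow> real measure) \<Rightarrow> real" where
  "opt_value d0 R = (\<Sum>s\<in>UNIV. pmf d0 s * (MAX a\<in>UNIV. Qstar R s a))"

end

theory Submission
  imports Defs
begin

lemma sq_int:
  fixes M :: "real measure"
  assumes P: "prob_space M" and B: "sets M = sets borel" and Rg: "measure M {0..Rmax} = 1"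
  shows "(\<integral>r. (c - r)\<^sup>2 \<partial>M) = c\<^sup>2 - 2 * c * (\<integral>r. r \<partial>M) + (\<integral>r. r\<^sup>2 \<partial>M)"
proof -
  interpret prob_space M by (rule P)
  have ae: "AE r in M. r \<in> {0..Rmax}" using AE_prob_1[OF Rg] .
  have m: "(\<lambda>r::real. r) \<in> borel_measurable M" "(\<lambda>r::real. r\<^sup>2) \<in> borel_measurable M"
    unfolding measurable_cong_sets[OF B refl] by auto
  have i1: "integrable M (\<lambda>r. r)"
    by (rule integrable_const_bound[where B=Rmax]) (use ae m in auto)
  have i2: "integrable M (\<lambda>r::real. r\<^sup>2)"
  proof (rule integrable_const_bound[where B="Rmax\<^sup>2"])
    show "AE x in M. norm (x\<^sup>2) \<le> Rmax\<^sup>2"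
      using ae by (rule eventually_mono) (auto intro!: power_mono)
  qed (use m in auto)
  have "(\<lambda>r. (c - r)\<^sup>2) = (\<lambda>r. (c\<^sup>2 - 2 * c * r) + r\<^sup>2)"
    by (auto simp: power2_eq_square algebra_simps)
  then have "(\<integral>r. (c - r)\<^sup>2 \<partial>M) = (\<integral>r. (c\<^sup>2 - 2 * c * r) + r\<^sup>2 \<partial>M)" by simp
  also have "\<dots> = (\<integral>r. (c\<^sup>2 - 2 * c * r) \<partial>M) + (\<integral>r. r\<^sup>2 \<partial>M)"
    using i1 i2 by (intro Bochner_Integration.integral_add) auto
  also have "(\<integral>r. (c\<^sup>2 - 2 * c * r) \<partial>M) = c\<^sup>2 - 2 * c * (\<integral>r. r \<partial>M)"
    using i1 by (subst Bochner_Integration.integral_diff) (auto simp: prob_space)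
  finally show ?thesis .
qed

lemma sum_pmf_UNIV: "(\<Sum>x\<in>UNIV. pmf (p :: 'x::finite pmf) x) = 1"
  by (rule sum_pmf_eq_1) auto

lemma cs_pmf:
  fixes p :: "'x::finite pmf"
  shows "(\<Sum>s\<in>UNIV. pmf p s * \<bar>x s\<bar>) \<le> sqrt (\<Sum>s\<in>UNIV. pmf p s * (x s)\<^sup>2)"
proof -
  have "(\<Sum>s\<in>UNIV. sqrt (pmf p s) * (sqrt (pmf p s) * \<bar>x s\<bar>))\<^sup>2
      \<le> (\<Sum>s\<in>UNIV. (sqrt (pmf p s))\<^sup>2) * (\<Sum>s\<in>UNIV. (sqrt (pmf p s) * \<bar>x s\<bar>)\<^sup>2)"
    by (rule Cauchy_Schwarz_ineq_sum)
  also have "\<dots> = (\<Sum>s\<in>UNIV. pmf p s * (x s)\<^sup>2)"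
    by (simp add: sum_pmf_UNIV power_mult_distrib)
  finally have "(\<Sum>s\<in>UNIV. pmf p s * \<bar>x s\<bar>)\<^sup>2 \<le> (\<Sum>s\<in>UNIV. pmf p s * (x s)\<^sup>2)"
    by (simp add: mult.assoc[symmetric])
  then show ?thesis by (simp add: real_le_rsqrt)
qed

theorem theorem1:
  fixes d0 :: "'s::finite pmf"
    and pib :: "'s \<Rightarrow> 'a::finite pmf"
    and R :: "'s \<Rightarrow> 'a \<Rightarrow> real measure"
    and F :: "('s \<Rightarrow> 'a \<Rightarrow> real) set"
    and fhat :: "'s \<Rightarrow> 'a \<Rightarrow> real"
    and Rmax C \<epsilon> :: real
  assumes R_prob: "\<And>s a. prob_space (R s a)"
    and R_borel: "\<And>s a. sets (R s a) = sets borel"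
    and R_range: "\<And>s a. measure (R s a) {0..Rmax} = 1"
    and F_fin: "finite F"
    and F_range: "\<And>f s a. f \<in> F \<Longrightarrow> f s a \<in> {0..Rmax}"
    and fhat_in: "fhat \<in> F"
    and fhat_opt: "sq_loss d0 pib R fhat - (MIN f\<in>F. sq_loss d0 pib R f) \<le> \<epsilon>"
    and C_pos: "0 < C"
    and coverage: "\<And>s a. pmf (pib s) a \<ge> 1 / C"
    and realizable: "Qstar R \<in> F"
  shows "value_of d0 R (greedy fhat) \<ge> opt_value d0 R - 2 * sqrt (C * \<epsilon>)"
proof -
  define Q where "Q = Qstar R"
  define D where "D s a = fhat s a - Q s a" for s a
  have loss: "sq_loss d0 pib R f = (\<Sum>s\<in>UNIV. \<Sum>a\<in>UNIV. pmf d0 s * pmf (pib s) a *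
      ((f s a)\<^sup>2 - 2 * f s a * Q s a + (\<integral>r. r\<^sup>2 \<partial>(R s a))))" for f
    unfolding sq_loss_def Q_def Qstar_def
    using sq_int[OF R_prob R_borel R_range] by simp
  have diff: "sq_loss d0 pib R fhat - sq_loss d0 pib R Q
     = (\<Sum>s\<in>UNIV. \<Sum>a\<in>UNIV. pmf d0 s * pmf (pib s) a * (D s a)\<^sup>2)"
    unfolding loss D_def sum_subtractf[symmetric]
    by (intro sum.cong refl) (simp add: power2_eq_square algebra_simps)
  have "(MIN f\<in>F. sq_loss d0 pib R f) \<le> sq_loss d0 pib R Q"
    using F_fin realizable unfolding Q_def by (intro Min_le) auto
  then have E: "(\<Sum>s\<in>UNIV. \<Sum>a\<in>UNIV. pmf d0 s * pmf (pib s) a * (D s a)\<^sup>2) \<le> \<epsilon>"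
    using fhat_opt diff by linarith
  have key: "(\<Sum>s\<in>UNIV. pmf d0 s * \<bar>D s (g s)\<bar>) \<le> sqrt (C * \<epsilon>)" for g :: "'s \<Rightarrow> 'a"
  proof -
    have "pmf d0 s * (D s (g s))\<^sup>2 \<le> C * (\<Sum>a\<in>UNIV. pmf d0 s * pmf (pib s) a * (D s a)\<^sup>2)" for s
    proof -
      have "1 \<le> C * pmf (pib s) (g s)" using coverage[of s "g s"] C_pos
        by (simp add: field_simps)
      then have "pmf d0 s * (D s (g s))\<^sup>2 \<le> pmf d0 s * (D s (g s))\<^sup>2 * (C * pmf (pib s) (g s))"
        using mult_left_mono[of 1 "C * pmf (pib s) (g s)" "pmf d0 s * (D s (g s))\<^sup>2"] by simp
      also have "\<dots> = C * (pmf d0 s * pmf (pib s) (g s) * (D s (g s))\<^sup>2)" by simp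
      also have "\<dots> \<le> C * (\<Sum>a\<in>UNIV. pmf d0 s * pmf (pib s) a * (D s a)\<^sup>2)"
        using C_pos by (intro mult_left_mono member_le_sum) auto
      finally show ?thesis .
    qed
    then have "(\<Sum>s\<in>UNIV. pmf d0 s * (D s (g s))\<^sup>2) \<le> C * (\<Sum>s\<in>UNIV. \<Sum>a\<in>UNIV. pmf d0 s * pmf (pib s) a * (D s a)\<^sup>2)"
      by (simp add: sum_distrib_left sum_mono)
    also have "\<dots> \<le> C * \<epsilon>" using E C_pos by simp
    finally have "sqrt (\<Sum>s\<in>UNIV. pmf d0 s * (D s (g s))\<^sup>2) \<le> sqrt (C * \<epsilon>)" by simp
    with cs_pmf[of d0 "\<lambda>s. D s (g s)"] show ?thesis by linarith
  qed
  define ast where "ast s = (SOME a. Q s a = (MAX b\<in>UNIV. Q s b))" for s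
  have ast: "Q s (ast s) = (MAX b\<in>UNIV. Q s b)" for s
  proof -
    have "(MAX b\<in>UNIV. Q s b) \<in> range (Q s)" by (rule Max_in) auto
    then show ?thesis unfolding ast_def by (metis (mono_tags, lifting) imageE someI)
  qed
  have gr: "fhat s b \<le> fhat s (greedy fhat s)" for s b
  proof -
    have "(MAX b\<in>UNIV. fhat s b) \<in> range (fhat s)" by (rule Max_in) auto
    then obtain a where "fhat s a = (MAX b\<in>UNIV. fhat s b)" by (metis imageE)
    then have "\<forall>b. fhat s b \<le> fhat s a" by (simp add: Max_ge_iff)
    then have "\<exists>a. \<forall>b. fhat s b \<le> fhat s a" by blast
    from someI_ex[OF this] show ?thesis unfolding greedy_def by blast
  qed
  have pt: "Q s (ast s) - Q s (greedy fhat s) \<le> \<bar>D s (ast s)\<bar> + \<bar>D s (greedy fhat s)\<bar>" for s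
    using gr[of s "ast s"] unfolding D_def by linarith
  have "opt_value d0 R - value_of d0 R (greedy fhat)
      = (\<Sum>s\<in>UNIV. pmf d0 s * (Q s (ast s) - Q s (greedy fhat s)))"
    unfolding opt_value_def value_of_def sum_subtractf[symmetric]
    by (intro sum.cong refl) (simp add: Q_def Qstar_def algebra_simps ast[unfolded Q_def Qstar_def, symmetric])
  also have "\<dots> \<le> (\<Sum>s\<in>UNIV. pmf d0 s * \<bar>D s (ast s)\<bar>) + (\<Sum>s\<in>UNIV. pmf d0 s * \<bar>D s (greedy fhat s)\<bar>)"
    unfolding sum.distrib[symmetric] distrib_left[symmetric]
    by (intro sum_mono mult_left_mono pt) auto
  also have "\<dots> \<le> sqrt (C * \<epsilon>) + sqrt (C * \<epsilon>)" by (intro add_mono key)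
  finally show ?thesis by simp
qed

end
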